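(* For any digraphs $G$ and $H$, there is a homomorphism $G\to\delta H$ if and only if there is a homomorphism $\delta^{-1}G\to H$.
   Context: Digraphs are finite, $G=(V,A)$ with $A\subseteq V\times V$; a homomorphism is an arc-preserving map of vertex sets, and $G\to H$ means a homomorphism from $G$ to $H$ exists. The arc graph of $G=(V,A)$ is $\delta G=(A,\delta A)$ with $\delta A=\{((u,v),(v,w)) : (u,v),(v,w)\in A\}$. For an equivalence $\sim$ on $V(G)$, the quotient $G/{\sim}$ has vertex set the equivalence classes, and $(X,Y)$ is an arc iff some $x\in X$, $y\in Y$ have $(x,y)\in A(G)$. Define $\delta^{-1}G$ as follows: let $V'=\{o_u,t_u : u\in V\}$ (new, distinct symbols), $A'=\{(o_u,t_u): u\in V\}$, let $\sim_0$ be the relation with $t_u\sim_0 o_v$ iff $(u,v)\in A$, let $\sim$ be the smallest equivalence relation on $V'$ containing $\sim_0$, and set $\delta^{-1}G=(V',A')/{\sim}$. *)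

theory Defs
  imports Main
begin

type_synonym 'a digraph = "'a set \<times> ('a \<times> 'a) set"

definition is_digraph :: "'a digraph \<Rightarrow> bool" where
  "is_digraph G \<longleftrightarrow> finite (fst G) \<and> snd G \<subseteq> fst G \<times> fst G"

definition is_hom :: "'a digraph \<Rightarrow> 'b digraph \<Rightarrow> ('a \<Rightarrow> 'b) \<Rightarrow> bool" where
  "is_hom G H f \<longleftrightarrow> (\<forall>v\<in>fst G. f v \<in> fst H) \<and> (\<forall>(u,v)\<in>snd G. (f u, f v) \<in> snd H)"

definition hom_exists :: "'a digraph \<Rightarrow> 'b digraph \<Rightarrow> bool" where
  "hom_exists G H \<longleftrightarrow> (\<exists>f. is_hom G H f)"

definition arc_graph :: "'a digraph \<Rightarrow> ('a \<times> 'a) digraph" where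
  "arc_graph G = (snd G, {((u,v),(v',w)). (u,v) \<in> snd G \<and> (v',w) \<in> snd G \<and> v' = v})"

definition quotient_digraph :: "'a digraph \<Rightarrow> 'a rel \<Rightarrow> 'a set digraph" where
  "quotient_digraph G R = (fst G // R,
     {(X,Y). X \<in> fst G // R \<and> Y \<in> fst G // R \<and> (\<exists>x\<in>X. \<exists>y\<in>Y. (x,y) \<in> snd G)})"

definition equiv_closure :: "'a set \<Rightarrow> 'a rel \<Rightarrow> 'a rel" where
  "equiv_closure V R = Id_on V \<union> (R \<union> R\<inverse>)\<^sup>+"

text \<open>\<delta>^{-1}G: vertex o_u is encoded as (u, False), t_u as (u, True).\<close>
definition inv_arc_graph :: "'a digraph \<Rightarrow> ('a \<times> bool) set digraph" where
  "inv_arc_graph G =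
    (let V' = fst G \<times> (UNIV :: bool set);
         A' = {((u,False),(u,True)) | u. u \<in> fst G};
         sim0 = {((u,True),(v,False)) | u v. (u,v) \<in> snd G}
     in quotient_digraph (V', A') (equiv_closure V' sim0))"

end

theory Submission
  imports Defs
begin

lemma equiv_closure_equiv:
  assumes "R \<subseteq> V \<times> V"
  shows "equiv V (equiv_closure V R)"
proof -
  have T: "(R \<union> R\<inverse>)\<^sup>+ \<subseteq> V \<times> V"
    using assms by (metis converse_subset_swap converse_Times le_sup_iff trancl_subset_Sigma)
  have s: "sym ((R \<union> R\<inverse>)\<^sup>+)"
    by (simp add: sym_Un_converse sym_trancl)
  show ?thesis
    unfolding equiv_def equiv_closure_def
  proof (intro conjI)
    show "Id_on V \<union> (R \<union> R\<inverse>)\<^sup>+ \<subseteq> V \<times> V" using T by blast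
    show "refl_on V (Id_on V \<union> (R \<union> R\<inverse>)\<^sup>+)"
      by (rule refl_onI) auto
    show "sym (Id_on V \<union> (R \<union> R\<inverse>)\<^sup>+)"
      using s unfolding sym_def by auto
    show "trans (Id_on V \<union> (R \<union> R\<inverse>)\<^sup>+)"
      unfolding trans_def by (auto intro: trancl_trans)
  qed
qed

lemma trancl_const:
  assumes "(x,y) \<in> S\<^sup>+" and "\<forall>(a,b)\<in>S. h a = h b"
  shows "h x = h y"
  using assms(1) by (induction rule: trancl_induct) (use assms(2) in auto)

theorem proposition2p1:
  fixes G :: "'a digraph" and H :: "'b digraph"
  assumes "is_digraph G" and "is_digraph H"
  shows "hom_exists G (arc_graph H) \<longleftrightarrow> hom_exists (inv_arc_graph G) H"
proof -
  define V' where "V' = fst G \<times> (UNIV :: bool set)"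
  define A' where "A' = {((u,False),(u,True)) | u. u \<in> fst G}"
  define sim0 where "sim0 = {((u,True),(v,False)) | u v. (u,v) \<in> snd G}"
  define R where "R = equiv_closure V' sim0"
  have IG: "inv_arc_graph G = quotient_digraph (V', A') R"
    unfolding inv_arc_graph_def V'_def A'_def sim0_def R_def Let_def by simp
  have sub: "sim0 \<subseteq> V' \<times> V'"
    using assms(1) unfolding sim0_def V'_def is_digraph_def by auto
  have eqR: "equiv V' R" unfolding R_def by (rule equiv_closure_equiv[OF sub])
  have Hs: "snd H \<subseteq> fst H \<times> fst H" using assms(2) unfolding is_digraph_def by auto
  show ?thesis
  proof
    assume "hom_exists G (arc_graph H)"
    then obtain f where f: "is_hom G (arc_graph H) f" unfolding hom_exists_def by blast
    have f1: "\<And>u. u \<in> fst G \<Longrightarrow> f u \<in> snd H"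
      using f unfolding is_hom_def arc_graph_def by auto
    have f2: "\<And>u v. (u,v) \<in> snd G \<Longrightarrow> snd (f u) = fst (f v)"
      using f unfolding is_hom_def arc_graph_def by fastforce
    define \<phi> where "\<phi> = (\<lambda>(u,b). if b then snd (f u) else fst (f u))"
    have resp0: "\<forall>(a,b)\<in>sim0 \<union> sim0\<inverse>. \<phi> a = \<phi> b"
      unfolding sim0_def \<phi>_def using f2 by auto
    have resp: "\<And>x y. (x,y) \<in> R \<Longrightarrow> \<phi> x = \<phi> y"
      unfolding R_def equiv_closure_def using trancl_const[OF _ resp0] by auto
    define g where "g = (\<lambda>X. \<phi> (SOME x. x \<in> X))"
    have gX: "\<And>X x. X \<in> V' // R \<Longrightarrow> x \<in> X \<Longrightarrow> g X = \<phi> x"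
    proof -
      fix X x assume X: "X \<in> V' // R" and x: "x \<in> X"
      have s: "(SOME x. x \<in> X) \<in> X" using x by (rule someI)
      have "((SOME x. x \<in> X), x) \<in> R"
        using X s x eqR by (metis quotient_eq_iff)
      then show "g X = \<phi> x" unfolding g_def by (rule resp)
    qed
    have A: "\<forall>X\<in>V' // R. g X \<in> fst H"
    proof
      fix X assume X': "X \<in> V' // R"
      then obtain x where x: "x \<in> V'" "X = R `` {x}" by (auto elim: quotientE)
      have "x \<in> X" using x eqR by (metis equiv_class_self)
      then have "g X = \<phi> x" using gX X' by blast
      moreover obtain u b where "x = (u,b)" "u \<in> fst G" using x V'_def by auto
      moreover have "f u \<in> fst H \<times> fst H" using f1 Hs \<open>u \<in> fst G\<close> by blast
      ultimately show "g X \<in> fst H" unfolding \<phi>_def by (cases "f u") auto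
    qed
    have B: "\<And>X Y x y. X \<in> V' // R \<Longrightarrow> Y \<in> V' // R \<Longrightarrow> x \<in> X \<Longrightarrow> y \<in> Y \<Longrightarrow> (x,y) \<in> A' \<Longrightarrow> (g X, g Y) \<in> snd H"
    proof -
      fix X Y x y assume X: "X \<in> V' // R" and Y: "Y \<in> V' // R" and xy: "x \<in> X" "y \<in> Y" "(x,y) \<in> A'"
      then obtain u where u: "x = (u,False)" "y = (u,True)" "u \<in> fst G" unfolding A'_def by auto
      have "g X = fst (f u)" "g Y = snd (f u)" using gX[OF X xy(1)] gX[OF Y xy(2)] u unfolding \<phi>_def by auto
      then show "(g X, g Y) \<in> snd H" using f1[OF u(3)] by simp
    qed
    have "is_hom (inv_arc_graph G) H g"
      unfolding is_hom_def IG quotient_digraph_def using A B by auto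
    then show "hom_exists (inv_arc_graph G) H" unfolding hom_exists_def by blast
  next
    assume "hom_exists (inv_arc_graph G) H"
    then obtain g where g: "is_hom (quotient_digraph (V', A') R) H g" unfolding hom_exists_def IG by blast
    have garc: "\<And>X Y x y. X \<in> V' // R \<Longrightarrow> Y \<in> V' // R \<Longrightarrow> x \<in> X \<Longrightarrow> y \<in> Y \<Longrightarrow> (x,y) \<in> A' \<Longrightarrow> (g X, g Y) \<in> snd H"
      using g unfolding is_hom_def quotient_digraph_def by fastforce
    define f where "f = (\<lambda>u. (g (R``{(u,False)}), g (R``{(u,True)})))"
    have fH: "\<And>u. u \<in> fst G \<Longrightarrow> f u \<in> snd H"
    proof -
      fix u assume u: "u \<in> fst G"
      have in1: "(u,False) \<in> V'" "(u,True) \<in> V'" using u V'_def by auto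
      show "f u \<in> snd H" unfolding f_def
        apply (rule garc[where x="(u,False)" and y="(u,True)"])
        using in1 eqR by (auto intro: quotientI equiv_class_self simp: A'_def u equiv_def refl_on_def)
    qed
    have "is_hom G (arc_graph H) f"
      unfolding is_hom_def arc_graph_def
    proof (intro conjI ballI)
      fix v assume "v \<in> fst G" then show "f v \<in> fst (snd H, {((u, v), v', w). (u, v) \<in> snd H \<and> (v', w) \<in> snd H \<and> v' = v})"
        using fH by simp
    next
      fix p assume p: "p \<in> snd G"
      obtain u v where uv: "p = (u,v)" by fastforce
      have uvG: "u \<in> fst G" "v \<in> fst G" using p uv assms(1) unfolding is_digraph_def by auto
      have "((u,True),(v,False)) \<in> sim0" using p uv sim0_def by auto
      then have "((u,True),(v,False)) \<in> R" unfolding R_def equiv_closure_def by auto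
      then have "R``{(u,True)} = R``{(v,False)}" using eqR by (simp add: equiv_class_eq)
      then have "snd (f u) = fst (f v)" unfolding f_def by simp
      then show "case p of (u, v) \<Rightarrow> (f u, f v) \<in> snd (snd H, {((u, v), v', w). (u, v) \<in> snd H \<and> (v', w) \<in> snd H \<and> v' = v})"
        using uv fH[OF uvG(1)] fH[OF uvG(2)] by (cases "f u", cases "f v") auto
    qed
    then show "hom_exists G (arc_graph H)" unfolding hom_exists_def by blast
  qed
qed

end
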